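(* Let $v\ge2$, $\epsilon>0$, and let $0\le k_1<k_2\le v$ be integers with $(k_1,k_2)\neq(0,v)$. Then $L(v,k_1,\epsilon)\le L(v,k_2,\epsilon)$ if and only if $e^\epsilon\ge E(k_1,k_2;v)$.
   Context: For $1\le k\le v-1$, $L(v,k,\epsilon)=\frac{(ke^\epsilon+v-k)^2}{k(v-k)}$, and $L(v,0,\epsilon)=L(v,v,\epsilon)=\infty$. For $0\le k_1<k_2\le v$ with $(k_1,k_2)\neq(0,v)$: $E(k_1,k_2;v)=\sqrt{\frac{(v-k_1)(v-k_2)}{k_1k_2}}$ if $k_1\ge1$ (so $E(k_1,v;v)=0$), and $E(0,k_2;v)=\infty$. *)

theory Defs
  imports Complex_Main "HOL-Library.Extended_Real"
begin

definition L :: "nat \<Rightarrow> nat \<Rightarrow> real \<Rightarrow> ereal" where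
  "L v k eps = (if k = 0 \<or> k = v then \<infinity>
     else ereal ((real k * exp eps + real v - real k)^2 / (real k * (real v - real k))))"

definition E :: "nat \<Rightarrow> nat \<Rightarrow> nat \<Rightarrow> ereal" where
  "E k1 k2 v = (if k1 = 0 then \<infinity>
     else ereal (sqrt ((real v - real k1) * (real v - real k2) / (real k1 * real k2))))"

end

theory Submission
  imports Defs
begin

lemma key_id:
  fixes a b w x :: real
  assumes "0 < a" "a < b" "b < w"
  shows "(b*x + w - b)^2 / (b*(w-b)) - (a*x + w - a)^2 / (a*(w-a))
    = w*(b-a)*(a*b*x^2 - (w-a)*(w-b)) / (a*b*(w-a)*(w-b))"
  using assms by (simp add: field_simps) (simp add: algebra_simps power2_eq_square)

lemma key:
  fixes a b w x :: real
  assumes "0 < a" "a < b" "b < w" "0 < x"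
  shows "(a*x + w - a)^2 / (a*(w-a)) \<le> (b*x + w - b)^2 / (b*(w-b))
     \<longleftrightarrow> sqrt ((w-a)*(w-b)/(a*b)) \<le> x"
proof -
  have pos: "0 < w*(b-a)/(a*b*(w-a)*(w-b))" using assms by simp
  have "(a*x + w - a)^2 / (a*(w-a)) \<le> (b*x + w - b)^2 / (b*(w-b))
     \<longleftrightarrow> 0 \<le> w*(b-a)*(a*b*x^2 - (w-a)*(w-b)) / (a*b*(w-a)*(w-b))"
    using key_id[OF assms(1-3), of x] by linarith
  also have "\<dots> \<longleftrightarrow> 0 \<le> (a*b*x^2 - (w-a)*(w-b))"
  proof -
    have "w*(b-a)*(a*b*x^2 - (w-a)*(w-b)) / (a*b*(w-a)*(w-b))
      = (w*(b-a)/(a*b*(w-a)*(w-b))) * (a*b*x^2 - (w-a)*(w-b))" by simp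
    moreover have "\<And>c t::real. 0 < c \<Longrightarrow> (0 \<le> c * t) = (0 \<le> t)"
      by (simp add: zero_le_mult_iff)
    ultimately show ?thesis using pos by presburger
  qed
  also have "\<dots> \<longleftrightarrow> (w-a)*(w-b)/(a*b) \<le> x^2"
    using assms by (simp add: pos_divide_le_eq mult.commute)
  also have "\<dots> \<longleftrightarrow> sqrt ((w-a)*(w-b)/(a*b)) \<le> x"
    using assms by (metis less_eq_real_def real_le_rsqrt real_sqrt_le_iff real_sqrt_pow2_iff
        real_sqrt_unique power2_eq_square real_sqrt_le_mono real_sqrt_abs abs_of_pos)
  finally show ?thesis .
qed

theorem lemma2:
  fixes v k1 k2 :: nat and eps :: real
  assumes "v \<ge> 2" and "eps > 0"
    and "k1 < k2" and "k2 \<le> v"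
    and "\<not> (k1 = 0 \<and> k2 = v)"
  shows "L v k1 eps \<le> L v k2 eps \<longleftrightarrow> ereal (exp eps) \<ge> E k1 k2 v"
proof (cases "k1 = 0")
  case True
  then have "k2 \<noteq> v" "k2 \<noteq> 0" using assms by auto
  then show ?thesis using True by (simp add: L_def E_def)
next
  case False
  note k1 = False
  show ?thesis
  proof (cases "k2 = v")
    case True
    then show ?thesis using k1 assms by (simp add: L_def E_def)
  next
    case False
    have "k1 \<noteq> v" using assms by auto
    moreover have "real k2 < real v" using False assms by simp
    ultimately show ?thesis using k1 False assms
      key[of "real k1" "real k2" "real v" "exp eps"]
      by (simp add: L_def E_def)
  qed
qed

end
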